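(* Let $G$ be a flag with vertices $v_1,\dots,v_n$ ordered by increasing $x$-coordinate, and let $i<j<k$. If $(v_i,v_j,v_k)$ is a good upper triplet, then every edge of $G[V^-(v_jv_k)]$ is disjoint from $v_iv_j$ and related to $v_iv_j$. If $(v_i,v_j,v_k)$ is a good lower triplet, then every edge of $G[V^+(v_jv_k)]$ is disjoint from $v_iv_j$ and related to $v_iv_j$.
   Context: Let $\mathcal C=S^1\times\mathbb R$ ($S^1=[0,1]$ with $0\sim1$), points $p=(p_x,p_y)$ with $0\le p_x<1$. A flag is a graph drawn on $\mathcal C$ (vertices distinct points, edges Jordan arcs, no overlapping edges, no edge through a vertex) that is complete, simple (any two edges meet in at most one point: a common endpoint or a proper crossing), monotone (every edge meets each vertical line $l_{x=a}=\{p:p_x=a\}$ at most once, no two vertices share an $x$-coordinate, no vertex has $x$-coordinate $0$), and such that $l_{x=0}$ meets every edge in its relative interior. A point $v$ is related to an $x$-monotone curve $e$ if $l_{x=v_x}$ meets $e$ in its relative interior; then $v$ is below (above) $e$ if $v_y$ is smaller (larger) than the $y$-coordinate of $l_{x=v_x}\cap e$. Two $x$-monotone curves $e,f$ are related if they do not cross, some vertical line meets both relative interiors, and all such lines meet them in the same vertical order; then $e\prec f$ means that on every vertical line meeting both relative interiors, $e$'s point has $y$-coordinate at most that of $f$'s point. For $i<j$, $V^+(v_iv_j)=\{v_s: s>j,\ v_s \text{ above } v_iv_j\}$ and $V^-(v_iv_j)=\{v_s: s>j,\ v_s \text{ below } v_iv_j\}$. For $i<j<k$, $(v_i,v_j,v_k)$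 is a good upper triplet if $v_jv_k\prec v_iv_j$ and $|V^+(v_jv_k)|\le1$, and a good lower triplet if $v_iv_j\prec v_jv_k$ and $|V^-(v_jv_k)|\le1$. Two edges are disjoint if they share no point; $G[U]$ denotes the induced subgraph. *)

theory Defs
  imports "HOL-Analysis.Analysis"
begin

text \<open>The cylinder S^1 x R, embedded as (unit circle in C) x R.
  A point p corresponds to the paper's (p_x, p_y) with fst p = cis (2 pi p_x), snd p = p_y.\<close>

type_synonym pt = "complex \<times> real"

definition Cyl :: "pt set" where
  "Cyl = {p. norm (fst p) = 1}"

definition xc :: "pt \<Rightarrow> real" where
  "xc p = (THE x. 0 \<le> x \<and> x < 1 \<and> cis (2 * pi * x) = fst p)"

definition yc :: "pt \<Rightarrow> real" where
  "yc p = snd p"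

definition vline :: "real \<Rightarrow> pt set" where
  "vline a = {p. fst p = cis (2 * pi * a)}"

definition relint :: "(real \<Rightarrow> pt) \<Rightarrow> pt set" where
  "relint g = g ` {0<..<1}"

definition xmono :: "(real \<Rightarrow> pt) \<Rightarrow> bool" where
  "xmono g \<longleftrightarrow> arc g \<and> path_image g \<subseteq> Cyl \<and>
     (\<forall>a p q. p \<in> path_image g \<inter> vline a \<and> q \<in> path_image g \<inter> vline a \<longrightarrow> p = q)"

definition on_line :: "(real \<Rightarrow> pt) \<Rightarrow> real \<Rightarrow> real \<Rightarrow> bool" where
  "on_line e a y \<longleftrightarrow> (cis (2 * pi * a), y) \<in> relint e"

definition pt_related :: "pt \<Rightarrow> (real \<Rightarrow> pt) \<Rightarrow> bool" where
  "pt_related v e \<longleftrightarrow> vline (xc v) \<inter> relint e \<noteq> {}"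

definition below :: "pt \<Rightarrow> (real \<Rightarrow> pt) \<Rightarrow> bool" where
  "below v e \<longleftrightarrow> pt_related v e \<and> (\<exists>y. on_line e (xc v) y \<and> yc v < y)"

definition above :: "pt \<Rightarrow> (real \<Rightarrow> pt) \<Rightarrow> bool" where
  "above v e \<longleftrightarrow> pt_related v e \<and> (\<exists>y. on_line e (xc v) y \<and> y < yc v)"

text \<open>Proper crossing of two x-monotone curves at a common relative-interior point p:
  the vertical order of the two curves (strictly) swaps when passing through p.\<close>
definition cross_at :: "(real \<Rightarrow> pt) \<Rightarrow> (real \<Rightarrow> pt) \<Rightarrow> pt \<Rightarrow> bool" where
  "cross_at e f p \<longleftrightarrow> p \<in> relint e \<inter> relint f \<and>
     (\<exists>\<epsilon>>0. \<forall>s t. 0 < s \<and> s < \<epsilon> \<and> 0 < t \<and> t < \<epsilon> \<longrightarrow>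
        (\<exists>ye yf ye' yf'. on_line e (xc p - s) ye \<and> on_line f (xc p - s) yf \<and>
           on_line e (xc p + t) ye' \<and> on_line f (xc p + t) yf' \<and>
           (ye - yf) * (ye' - yf') < 0))"

definition crosses :: "(real \<Rightarrow> pt) \<Rightarrow> (real \<Rightarrow> pt) \<Rightarrow> bool" where
  "crosses e f \<longleftrightarrow> (\<exists>p. cross_at e f p)"

definition related :: "(real \<Rightarrow> pt) \<Rightarrow> (real \<Rightarrow> pt) \<Rightarrow> bool" where
  "related e f \<longleftrightarrow> \<not> crosses e f \<and>
     (\<exists>a ye yf. on_line e a ye \<and> on_line f a yf) \<and>
     ((\<forall>a ye yf. on_line e a ye \<and> on_line f a yf \<longrightarrow> ye \<le> yf) \<or>
      (\<forall>a ye yf. on_line e a ye \<and> on_line f a yf \<longrightarrow> yf \<le> ye))"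

text \<open>e \<prec> f (only meaningful for related curves, so relatedness is part of it).\<close>
definition prec :: "(real \<Rightarrow> pt) \<Rightarrow> (real \<Rightarrow> pt) \<Rightarrow> bool" where
  "prec e f \<longleftrightarrow> related e f \<and>
     (\<forall>a ye yf. on_line e a ye \<and> on_line f a yf \<longrightarrow> ye \<le> yf)"

definition flag :: "nat \<Rightarrow> (nat \<Rightarrow> pt) \<Rightarrow> (nat \<Rightarrow> nat \<Rightarrow> real \<Rightarrow> pt) \<Rightarrow> bool" where
  "flag n v E \<longleftrightarrow>
     (\<forall>i\<in>{1..n}. v i \<in> Cyl) \<and> inj_on v {1..n} \<and>
     (\<forall>i\<in>{1..n}. xc (v i) \<noteq> 0) \<and>
     (\<forall>i j. 1 \<le> i \<and> i < j \<and> j \<le> n \<longrightarrow> xc (v i) < xc (v j)) \<and>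
     (\<forall>i j. 1 \<le> i \<and> i < j \<and> j \<le> n \<longrightarrow>
        xmono (E i j) \<and> pathstart (E i j) = v i \<and> pathfinish (E i j) = v j \<and>
        (\<forall>k\<in>{1..n}. k \<noteq> i \<and> k \<noteq> j \<longrightarrow> v k \<notin> path_image (E i j)) \<and>
        vline 0 \<inter> relint (E i j) \<noteq> {}) \<and>
     (\<forall>i j s t. 1 \<le> i \<and> i < j \<and> j \<le> n \<and> 1 \<le> s \<and> s < t \<and> t \<le> n \<and> (i, j) \<noteq> (s, t) \<longrightarrow>
        (\<forall>p q. p \<in> path_image (E i j) \<inter> path_image (E s t) \<and>
               q \<in> path_image (E i j) \<inter> path_image (E s t) \<longrightarrow> p = q) \<and>
        (\<forall>p \<in> path_image (E i j) \<inter> path_image (E s t).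
           (\<exists>m \<in> {i, j} \<inter> {s, t}. p = v m) \<or> cross_at (E i j) (E s t) p))"

definition Vplus :: "nat \<Rightarrow> (nat \<Rightarrow> pt) \<Rightarrow> (nat \<Rightarrow> nat \<Rightarrow> real \<Rightarrow> pt) \<Rightarrow> nat \<Rightarrow> nat \<Rightarrow> nat set" where
  "Vplus n v E i j = {s. j < s \<and> s \<le> n \<and> above (v s) (E i j)}"

definition Vminus :: "nat \<Rightarrow> (nat \<Rightarrow> pt) \<Rightarrow> (nat \<Rightarrow> nat \<Rightarrow> real \<Rightarrow> pt) \<Rightarrow> nat \<Rightarrow> nat \<Rightarrow> nat set" where
  "Vminus n v E i j = {s. j < s \<and> s \<le> n \<and> below (v s) (E i j)}"

definition good_upper :: "nat \<Rightarrow> (nat \<Rightarrow> pt) \<Rightarrow> (nat \<Rightarrow> nat \<Rightarrow> real \<Rightarrow> pt) \<Rightarrow> nat \<Rightarrow> nat \<Rightarrow> nat \<Rightarrow> bool" where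
  "good_upper n v E i j k \<longleftrightarrow> prec (E j k) (E i j) \<and> card (Vplus n v E j k) \<le> 1"

definition good_lower :: "nat \<Rightarrow> (nat \<Rightarrow> pt) \<Rightarrow> (nat \<Rightarrow> nat \<Rightarrow> real \<Rightarrow> pt) \<Rightarrow> nat \<Rightarrow> nat \<Rightarrow> nat \<Rightarrow> bool" where
  "good_lower n v E i j k \<longleftrightarrow> prec (E i j) (E j k) \<and> card (Vminus n v E j k) \<le> 1"

end

theory Submission
  imports Defs "HOL-Analysis.Analysis"
begin

lemma cis2pi_eq: "cis (2*pi*a) = cis (2*pi*b) \<longleftrightarrow> (\<exists>k::int. a = b + k)"
proof -
  have "cis (2*pi*a) = cis (2*pi*b) \<longleftrightarrow> sin (2*pi*a) = sin (2*pi*b) \<and> cos (2*pi*a) = cos (2*pi*b)"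
    by (auto simp: complex_eq_iff)
  also have "\<dots> \<longleftrightarrow> (\<exists>x::int. 2*pi*a = 2*pi*b + 2 * pi * real_of_int x)"
    by (rule sin_cos_eq_iff)
  also have "\<dots> \<longleftrightarrow> (\<exists>k::int. a = b + k)"
  proof -
    have "\<And>x::int. (2*pi*a = 2*pi*b + 2 * pi * real_of_int x) \<longleftrightarrow> (a = b + x)"
    proof -
      fix x :: int
      have "2*pi*b + 2 * pi * real_of_int x = 2*pi*(b+x)" by (simp add: algebra_simps)
      then show "(2*pi*a = 2*pi*b + 2 * pi * real_of_int x) \<longleftrightarrow> (a = b + x)" by simp
    qed
    then show ?thesis by simp
  qed
  finally show ?thesis .
qed

lemma int_diff_small: "a = b + real_of_int k \<Longrightarrow> \<bar>a - b\<bar> < 1 \<Longrightarrow> a = b"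
  by (cases "k = 0") (auto, linarith?)

lemma xc_props:
  assumes "norm (fst p) = 1"
  shows "0 \<le> xc p \<and> xc p < 1 \<and> cis (2*pi*xc p) = fst p"
proof -
  have nz: "fst p \<noteq> 0" using assms by auto
  have sg: "sgn (fst p) = fst p" using assms by (simp add: sgn_div_norm)
  define A where "A = Arg (fst p)"
  have cA: "cis A = fst p" using cis_Arg[OF nz] sg A_def by simp
  have Ar: "-pi < A" "A \<le> pi" using Arg_bounded A_def by auto
  define x where "x = (if A < 0 then A/(2*pi) + 1 else A/(2*pi))"
  have x01: "0 \<le> x \<and> x < 1"
    using Ar pi_gt_zero unfolding x_def by (auto simp: field_simps)
  have cx: "cis (2*pi*x) = fst p"
  proof -
    have "cis (2*pi*x) = cis (2*pi*(A/(2*pi)))"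
      unfolding cis2pi_eq x_def by (rule exI[where x="if A<0 then 1 else 0"]) auto
    then show ?thesis using cA by simp
  qed
  have uniq: "y = x" if "0 \<le> y \<and> y < 1 \<and> cis (2*pi*y) = fst p" for y
  proof -
    from that cx obtain k::int where "y = x + k" using cis2pi_eq by metis
    moreover have "\<bar>y - x\<bar> < 1" using that x01 by auto
    ultimately show ?thesis by (rule int_diff_small)
  qed
  have "xc p = x" unfolding xc_def
    by (rule the_equality) (use x01 cx uniq in auto)
  then show ?thesis using x01 cx by simp
qed

lemma ivt_any:
  fixes f :: "real \<Rightarrow> real"
  assumes "continuous_on {a..b} f" "a \<le> b" "(f a \<le> y \<and> y \<le> f b) \<or> (f b \<le> y \<and> y \<le> f a)"
  shows "\<exists>x\<in>{a..b}. f x = y"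
  using assms IVT'[of f a y b] IVT2'[of f b y a] by (meson atLeastAtMost_iff)

lemma edge_height:
  assumes xm: "xmono e"
    and st: "pathstart e = (cis (2*pi*xa), ya)" and fi: "pathfinish e = (cis (2*pi*xb), yb)"
    and x: "0 < xa" "xa < xb" "xb < 1"
    and v0: "vline 0 \<inter> relint e \<noteq> {}"
  obtains H where "continuous_on {xb-1..xa} H"
    "path_image e = (\<lambda>u. (cis (2*pi*u), H u)) ` {xb-1..xa}"
    "relint e = (\<lambda>u. (cis (2*pi*u), H u)) ` {xb-1<..<xa}"
    "H xa = ya" "H (xb-1) = yb"
proof -
  have arc: "arc e" and img: "path_image e \<subseteq> Cyl"
    and vl: "\<And>a p q. p \<in> path_image e \<inter> vline a \<Longrightarrow> q \<in> path_image e \<inter> vline a \<Longrightarrow> p = q"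
    using xm unfolding xmono_def by blast+
  have conte: "continuous_on {0..1} e" and inje: "inj_on e {0..1}"
    using arc unfolding arc_def path_def by auto
  define f where "f t = fst (e t)" for t
  have contf: "continuous_on {0..1} f" unfolding f_def
    by (intro continuous_intros conte)
  have nf: "norm (f t) = 1" if "t \<in> {0..1}" for t
    using img that unfolding f_def Cyl_def path_image_def by force
  obtain g where contg: "continuous_on {0..1} g" and fg: "\<And>t. t \<in> {0..1} \<Longrightarrow> f t = exp (g t)"
    using continuous_logarithm_on_contractible[OF contf convex_imp_contractible[OF convex_real_interval(5)]]
      nf by (metis norm_zero zero_neq_one)
  define th where "th t = Im (g t) / (2*pi)" for t
  have contth: "continuous_on {0..1} th" unfolding th_def by (intro continuous_intros contg) simp
  have fth: "f t = cis (2*pi*th t)" if "t \<in> {0..1}" for t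
  proof -
    have "f t = exp (Re (g t)) * cis (Im (g t))" using fg[OF that] exp_eq_polar by simp
    moreover have "norm (f t) = exp (Re (g t))" using fg[OF that] by simp
    ultimately have "f t = cis (Im (g t))" using nf[OF that] by simp
    then show ?thesis unfolding th_def by simp
  qed
  have injmod: "t1 = t2" if "t1 \<in> {0..1}" "t2 \<in> {0..1}" "th t1 = th t2 + real_of_int k" for t1 t2 k
  proof -
    have "f t1 = f t2" using fth[OF that(1)] fth[OF that(2)] that(3) cis2pi_eq by metis
    then have "e t1 \<in> path_image e \<inter> vline (th t1)" "e t2 \<in> path_image e \<inter> vline (th t1)"
      using that fth unfolding path_image_def vline_def f_def by auto
    then have "e t1 = e t2" using vl by blast
    then show ?thesis using inje that inj_onD by metis
  qed
  obtain k0 :: int where k0: "th 0 = xa + k0"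
  proof -
    have "cis (2*pi*th 0) = cis (2*pi*xa)" using fth[of 0] st unfolding f_def pathstart_def by simp
    then show ?thesis using that cis2pi_eq by metis
  qed
  define th' where "th' t = th t - k0" for t
  have contth': "continuous_on {0..1} th'" unfolding th'_def by (intro continuous_intros contth)
  have fth': "f t = cis (2*pi*th' t)" if "t \<in> {0..1}" for t
  proof -
    have "cis (2*pi*th' t) = cis (2*pi*th t)"
      unfolding cis2pi_eq th'_def by (rule exI[where x="-k0"]) simp
    then show ?thesis using fth[OF that] by simp
  qed
  have injmod': "t1 = t2" if "t1 \<in> {0..1}" "t2 \<in> {0..1}" "th' t1 = th' t2 + real_of_int k" for t1 t2 k
    using injmod[OF that(1,2), of k] that(3) unfolding th'_def by simp
  have th0: "th' 0 = xa" using k0 unfolding th'_def by simp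
  have inj': "inj_on th' {0..1}"
    by (rule inj_onI) (use injmod'[where k=0] in auto)
  have small: "th' t1 - th' t2 < 1" if hh: "t1 \<in> {0..1}" "t2 \<in> {0..1}" for t1 t2
  proof (rule ccontr)
    assume "\<not> ?thesis"
    then have ge: "th' t2 + 1 \<le> th' t1" by simp
    obtain t3 where t3: "t3 \<in> {min t1 t2..max t1 t2}" "th' t3 = th' t2 + 1"
    proof (cases "t1 \<le> t2")
      case True
      have "continuous_on {t1..t2} th'" using contth' hh by (auto intro: continuous_on_subset)
      then show ?thesis using ivt_any[of t1 t2 th' "th' t2 + 1"] ge True hh that by (auto simp: min_def max_def)
    next
      case False
      have "continuous_on {t2..t1} th'" using contth' hh by (auto intro: continuous_on_subset)
      then show ?thesis using ivt_any[of t2 t1 th' "th' t2 + 1"] ge False hh that by (auto simp: min_def max_def)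
    qed
    have "t3 \<in> {0..1}" using t3(1) hh by auto
    then have "t3 = t2" using injmod'[of t3 t2 1] t3(2) hh by simp
    then show False using t3(2) by simp
  qed
  obtain m :: int where m: "th' 1 = xb + m"
  proof -
    have "cis (2*pi*th' 1) = cis (2*pi*xb)" using fth'[of 1] fi unfolding f_def pathfinish_def by simp
    then show ?thesis using that cis2pi_eq by metis
  qed
  have "th' 1 - th' 0 < 1" "th' 0 - th' 1 < 1" using small[of 1 0] small[of 0 1] by auto
  then have "real_of_int m < 1" "real_of_int m > -2" using m th0 x by linarith+
  then have "m < 1" "m > -2" by linarith+
  then have m01: "m = 0 \<or> m = -1" by linarith
  have mono: "(th' 0 < th' t \<and> th' t < th' 1) \<or> (th' 1 < th' t \<and> th' t < th' 0)" if "0 < t" "t < 1" for t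
    using continuous_inj_imp_mono[OF that contth' inj'] .
  have m1: "m = -1"
  proof (rule ccontr)
    assume "m \<noteq> -1"
    then have m0: "m = 0" using m01 by simp
    obtain p where p: "p \<in> vline 0" "p \<in> relint e" using v0 by blast
    then obtain t where t: "t \<in> {0<..<1}" "p = e t" unfolding relint_def by auto
    have "cis (2*pi*th' t) = cis (2*pi*0)" using p t fth'[of t] unfolding vline_def f_def by auto
    then obtain k :: int where k: "th' t = real_of_int k" unfolding cis2pi_eq by auto
    have "xa < th' t \<and> th' t < xb" using mono[of t] t m m0 th0 x by auto
    then have "real_of_int k > 0" "real_of_int k < 1" using k x by linarith+
    then have "k > 0" "k < 1" by linarith+
    then show False by linarith
  qed
  have th1: "th' 1 = xb - 1" using m m1 by simp
  have thr: "th' t \<in> {xb-1<..<xa}" if "t \<in> {0<..<1}" for t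
    using mono[of t] that th0 th1 x by auto
  have img1: "th' ` {0..1} = {xb-1..xa}"
  proof
    show "th' ` {0..1} \<subseteq> {xb - 1..xa}"
    proof
      fix u assume "u \<in> th' ` {0..1}"
      then obtain t where "t \<in> {0..1}" "u = th' t" by auto
      then show "u \<in> {xb-1..xa}" using thr[of t] th0 th1 x
        by (cases "t = 0"; cases "t = 1") auto
    qed
    show "{xb - 1..xa} \<subseteq> th' ` {0..1}"
    proof
      fix u assume "u \<in> {xb-1..xa}"
      then obtain t where "t \<in> {0..1}" "th' t = u"
        using ivt_any[OF contth', of u] th0 th1 by auto
      then show "u \<in> th' ` {0..1}" by auto
    qed
  qed
  have img2: "th' ` {0<..<1} = {xb-1<..<xa}"
  proof
    show "th' ` {0<..<1} \<subseteq> {xb-1<..<xa}" using thr by auto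
    show "{xb-1<..<xa} \<subseteq> th' ` {0<..<1}"
    proof
      fix u assume u: "u \<in> {xb-1<..<xa}"
      then obtain t where t: "t \<in> {0..1}" "th' t = u"
        using ivt_any[OF contth', of u] th0 th1 by auto
      then have "t \<noteq> 0" "t \<noteq> 1" using u th0 th1 by auto
      then show "u \<in> th' ` {0<..<1}" using t by force
    qed
  qed
  define psi where "psi = inv_into {0..1} th'"
  have psith: "psi (th' t) = t" if "t \<in> {0..1}" for t
    unfolding psi_def using inv_into_f_f[OF inj' that] .
  have contpsi: "continuous_on {xb-1..xa} psi"
    using continuous_on_inv[OF contth' compact_Icc[of 0 1]] psith img1 by metis
  have psir: "psi u \<in> {0..1}" if "u \<in> {xb-1..xa}" for u
  proof -
    have "u \<in> th' ` {0..1}" using that img1 by simp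
    then obtain t where "t \<in> {0..1}" "u = th' t" by blast
    then show ?thesis using psith by simp
  qed
  define H where "H u = snd (e (psi u))" for u
  have contH: "continuous_on {xb-1..xa} H"
    unfolding H_def
    by (intro continuous_intros continuous_on_compose2[OF conte contpsi]) (use psir in auto)
  have ept: "e t = (cis (2*pi*th' t), H (th' t))" if "t \<in> {0..1}" for t
    using fth'[OF that] psith[OF that] unfolding H_def f_def by (simp add: prod_eq_iff)
  have pim: "path_image e = (\<lambda>u. (cis (2*pi*u), H u)) ` {xb-1..xa}"
  proof -
    have "path_image e = (\<lambda>t. (cis (2*pi*th' t), H (th' t))) ` {0..1}"
      unfolding path_image_def using ept by (auto simp: image_def)
    also have "\<dots> = (\<lambda>u. (cis (2*pi*u), H u)) ` (th' ` {0..1})" by (simp add: image_image)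
    finally show ?thesis using img1 by simp
  qed
  have rim: "relint e = (\<lambda>u. (cis (2*pi*u), H u)) ` {xb-1<..<xa}"
  proof -
    have "relint e = (\<lambda>t. (cis (2*pi*th' t), H (th' t))) ` {0<..<1}"
      unfolding relint_def using ept by (auto simp: image_def)
    also have "\<dots> = (\<lambda>u. (cis (2*pi*u), H u)) ` (th' ` {0<..<1})" by (simp add: image_image)
    finally show ?thesis using img2 by simp
  qed
  have "H xa = ya" using ept[of 0] th0 st unfolding pathstart_def by simp
  moreover have "H (xb-1) = yb" using ept[of 1] th1 fi unfolding pathfinish_def by simp
  ultimately show ?thesis using that contH pim rim by blast
qed

lemma zero_between:
  fixes g :: "real \<Rightarrow> real"
  assumes "continuous_on {x..y} g" "x \<le> y" "g x * g y \<le> 0"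
  shows "\<exists>z\<in>{x..y}. g z = 0"
proof -
  have "(g x \<le> 0 \<and> 0 \<le> g y) \<or> (g y \<le> 0 \<and> 0 \<le> g x)"
    using assms(3) by (auto simp: mult_le_0_iff)
  then show ?thesis using ivt_any[OF assms(1,2)] by blast
qed

lemma neg_const:
  fixes g :: "real \<Rightarrow> real"
  assumes "continuous_on {x..y} g" "g x < 0" "\<forall>u\<in>{x..y}. g u \<noteq> 0"
  shows "\<forall>u\<in>{x..y}. g u < 0"
proof
  fix u assume u: "u \<in> {x..y}"
  show "g u < 0"
  proof (rule ccontr)
    assume "\<not> g u < 0"
    moreover have "continuous_on {x..u} g" using assms(1) u by (auto intro: continuous_on_subset)
    ultimately obtain z where "z \<in> {x..u}" "g z = 0"
      using zero_between[of x u g] assms(2) u by (auto simp: mult_le_0_iff)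
    then show False using assms(3) u by auto
  qed
qed

lemma nozero:
  fixes g :: "real \<Rightarrow> real"
  assumes cont: "continuous_on {x..y} g" and gx: "g x < 0" and gy: "g y < 0"
    and uq: "\<forall>z1\<in>{x..y}. \<forall>z2\<in>{x..y}. g z1 = 0 \<longrightarrow> g z2 = 0 \<longrightarrow> z1 = z2"
    and cr: "\<forall>z\<in>{x<..<y}. g z = 0 \<longrightarrow> (\<exists>\<epsilon>>0. \<forall>\<delta>. 0 < \<delta> \<and> \<delta> < \<epsilon> \<longrightarrow> g (z - \<delta>) * g (z + \<delta>) < 0)"
  shows "\<forall>u\<in>{x..y}. g u < 0"
proof (rule ccontr)
  assume "\<not> ?thesis"
  then obtain w where w: "w \<in> {x..y}" "g w \<ge> 0" by force
  obtain z where z: "z \<in> {x..w}" "g z = 0"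
    using zero_between[of x w g] cont w gx by (force intro: continuous_on_subset simp: mult_le_0_iff)
  have zin: "z \<in> {x<..<y}" using z w gx gy by (cases "z = x"; cases "z = y") auto
  have left: "\<forall>u\<in>{x..z}. u \<noteq> z \<longrightarrow> g u < 0"
  proof -
    have "continuous_on {x..z} g" using cont zin by (auto intro: continuous_on_subset)
    moreover have "\<forall>u\<in>{x..z}. u \<noteq> z \<longrightarrow> g u \<noteq> 0" using uq z zin by auto
    ultimately show ?thesis
    proof (intro ballI impI)
      fix u assume h: "continuous_on {x..z} g" "\<forall>u\<in>{x..z}. u \<noteq> z \<longrightarrow> g u \<noteq> 0" "u \<in> {x..z}" "u \<noteq> z"
      have "continuous_on {x..u} g" using h(1) h(3) by (auto intro: continuous_on_subset)
      then show "g u < 0" using neg_const[of x u g] gx h by auto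
    qed
  qed
  have right: "\<forall>u\<in>{z..y}. u \<noteq> z \<longrightarrow> g u < 0"
  proof (intro ballI impI)
    fix u assume u: "u \<in> {z..y}" "u \<noteq> z"
    show "g u < 0"
    proof (rule ccontr)
      assume "\<not> g u < 0"
      moreover have "continuous_on {u..y} g" using cont u zin by (auto intro: continuous_on_subset)
      ultimately obtain z' where "z' \<in> {u..y}" "g z' = 0"
        using zero_between[of u y g] gy u by (force simp: mult_le_0_iff)
      then show False using uq z zin u by force
    qed
  qed
  obtain \<epsilon> where e: "\<epsilon> > 0" "\<forall>\<delta>. 0 < \<delta> \<and> \<delta> < \<epsilon> \<longrightarrow> g (z - \<delta>) * g (z + \<delta>) < 0"
    using cr zin z by blast
  define \<delta> where "\<delta> = min (\<epsilon>/2) (min ((z - x)/2) ((y - z)/2))"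
  have dd: "\<delta> \<le> (z-x)/2" "\<delta> \<le> (y-z)/2" "\<delta> \<le> \<epsilon>/2" unfolding \<delta>_def by linarith+
  have d: "0 < \<delta>" "\<delta> < \<epsilon>" "x \<le> z - \<delta>" "z + \<delta> \<le> y" using e zin dd unfolding \<delta>_def by auto
  have "g (z - \<delta>) < 0" using left d by auto
  moreover have "g (z + \<delta>) < 0" using right d by auto
  ultimately have "g (z - \<delta>) * g (z + \<delta>) > 0" by (simp add: mult_neg_neg)
  then show False using e d by force
qed

lemma core:
  fixes I J S K :: "real \<Rightarrow> real" and a b c d e :: real
  assumes ord: "0<a" "a<b" "b<c" "c<d" "d<e" "e<1"
    and cI: "continuous_on {b-1..a} I" and cJ: "continuous_on {c-1..b} J"
    and cS: "continuous_on {e-1..d} S" and cK: "continuous_on {d-1..c} K"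
    and eIJ: "I (b-1) = J b" and eJK: "J (c-1) = K c" and eSK: "S d = K (d-1)"
    and prec: "\<forall>u\<in>{c-1<..<a}. J u < I u"
    and bs: "S d < J (d-1)" and bt: "S (e-1) < J (e-1)"
    and av1: "S b \<noteq> J b" and av2: "S c \<noteq> K c" and av3: "K b \<noteq> J b" and av4: "S a \<noteq> I a"
    and SJ1: "\<forall>u1\<in>{e-1..b}. \<forall>u2\<in>{c..d}. S u1 = J u1 \<longrightarrow> S u2 \<noteq> J (u2-1)"
    and SJ2: "\<forall>u1\<in>{e-1..b}. \<forall>u2\<in>{e-1..b}. S u1 = J u1 \<longrightarrow> S u2 = J u2 \<longrightarrow> u1 = u2"
    and SK: "\<forall>u\<in>{e-1..c}. S u \<noteq> K u"
    and KJ: "\<forall>u\<in>{d-1..b}. K u \<noteq> J u"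
    and SIu1: "\<forall>u1\<in>{e-1..a}. \<forall>u2\<in>{e-1..a}. S u1 = I u1 \<longrightarrow> S u2 = I u2 \<longrightarrow> u1 = u2"
    and SIu2: "\<forall>u1\<in>{b..d}. \<forall>u2\<in>{b..d}. S u1 = I (u1-1) \<longrightarrow> S u2 = I (u2-1) \<longrightarrow> u1 = u2"
    and SIc1: "\<forall>z\<in>{e-1<..<a}. S z = I z \<longrightarrow> (\<exists>\<epsilon>>0. \<forall>\<delta>. 0<\<delta> \<and> \<delta><\<epsilon> \<longrightarrow>
                  (S (z-\<delta>) - I (z-\<delta>)) * (S (z+\<delta>) - I (z+\<delta>)) < 0)"
    and SIc2: "\<forall>z\<in>{b<..<d}. S z = I (z-1) \<longrightarrow> (\<exists>\<epsilon>>0. \<forall>\<delta>. 0<\<delta> \<and> \<delta><\<epsilon> \<longrightarrow>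
                  (S (z-\<delta>) - I (z-\<delta>-1)) * (S (z+\<delta>) - I (z+\<delta>-1)) < 0)"
  shows "(\<forall>u\<in>{e-1..a}. S u < I u) \<and> (\<forall>u\<in>{b..d}. S u < I (u-1))"
proof -
  have caseB: "S b < J b"
  proof (rule ccontr)
    assume "\<not> S b < J b"
    then have Sb: "S b > J b" using av1 by simp
    have cKJ: "continuous_on {d-1..b} (\<lambda>u. K u - J u)"
      using ord by (intro continuous_intros continuous_on_subset[OF cK] continuous_on_subset[OF cJ]) auto
    have "\<forall>u\<in>{d-1..b}. K u - J u < 0"
      by (rule neg_const[OF cKJ]) (use eSK bs KJ in auto)
    then have Kb: "K b < J b" using ord by auto
    have Sc: "S c < K c"
    proof (rule ccontr)
      assume "\<not> S c < K c"
      then have Sc': "S c > K c" using av2 by simp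
      have c1: "continuous_on {c..d} (\<lambda>u. S u - J (u-1))"
        using ord by (intro continuous_intros continuous_on_subset[OF cS]
            continuous_on_compose2[OF cJ, of _ "\<lambda>u. u-1"]) auto
      obtain u2 where u2: "u2 \<in> {c..d}" "S u2 - J (u2-1) = 0"
        using zero_between[OF c1] ord Sc' eJK bs by (force simp: mult_le_0_iff)
      have c2: "continuous_on {e-1..b} (\<lambda>u. S u - J u)"
        using ord by (intro continuous_intros continuous_on_subset[OF cS] continuous_on_subset[OF cJ]) auto
      obtain u1 where u1: "u1 \<in> {e-1..b}" "S u1 - J u1 = 0"
        using zero_between[OF c2] ord Sb bt by (force simp: mult_le_0_iff)
      show False using SJ1 u1 u2 by auto
    qed
    have c3: "continuous_on {b..c} (\<lambda>u. S u - K u)"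
      using ord by (intro continuous_intros continuous_on_subset[OF cS] continuous_on_subset[OF cK]) auto
    obtain w where w: "w \<in> {b..c}" "S w - K w = 0"
      using zero_between[OF c3] ord Sb Kb Sc by (force simp: mult_le_0_iff)
    show False using SK w ord by auto
  qed
  have r2: "\<forall>u\<in>{b..d}. S u - I (u-1) < 0"
  proof (rule nozero)
    show "continuous_on {b..d} (\<lambda>u. S u - I (u-1))"
      using ord by (intro continuous_intros continuous_on_subset[OF cS]
            continuous_on_compose2[OF cI, of _ "\<lambda>u. u-1"]) auto
    show "S b - I (b-1) < 0" using caseB eIJ by simp
    have "J (d-1) < I (d-1)" using prec ord by auto
    then show "S d - I (d-1) < 0" using bs by simp
    show "\<forall>z1\<in>{b..d}. \<forall>z2\<in>{b..d}. S z1 - I (z1-1) = 0 \<longrightarrow> S z2 - I (z2-1) = 0 \<longrightarrow> z1 = z2"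
      using SIu2 by auto
    show "\<forall>z\<in>{b<..<d}. S z - I (z-1) = 0 \<longrightarrow> (\<exists>\<epsilon>>0. \<forall>\<delta>. 0 < \<delta> \<and> \<delta> < \<epsilon> \<longrightarrow>
           (S (z-\<delta>) - I (z-\<delta>-1)) * (S (z+\<delta>) - I (z+\<delta>-1)) < 0)"
      using SIc2 by auto
  qed
  have c4: "continuous_on {e-1..a} (\<lambda>u. S u - I u)"
    using ord by (intro continuous_intros continuous_on_subset[OF cS] continuous_on_subset[OF cI]) auto
  have "J (e-1) < I (e-1)" using prec ord by auto
  then have g1e: "S (e-1) - I (e-1) < 0" using bt by simp
  have Sa: "S a < I a"
  proof (rule ccontr)
    assume "\<not> S a < I a"
    then have Sa': "S a > I a" using av4 by simp
    then obtain z where z: "z \<in> {e-1..a}" "S z - I z = 0"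
      using zero_between[OF c4] ord g1e by (force simp: mult_le_0_iff)
    have zz: "z \<noteq> e-1" using z g1e by auto
    have "z \<noteq> a" using z Sa' by auto
    then have Jz: "J z < I z" using prec z ord zz by auto
    have c5: "continuous_on {e-1..z} (\<lambda>u. S u - J u)"
      using ord z by (intro continuous_intros continuous_on_subset[OF cS] continuous_on_subset[OF cJ]) auto
    obtain z1 where z1: "z1 \<in> {e-1..z}" "S z1 - J z1 = 0"
      using zero_between[OF c5] z bt Jz by (force simp: mult_le_0_iff)
    have c6: "continuous_on {z..b} (\<lambda>u. S u - J u)"
      using ord z by (intro continuous_intros continuous_on_subset[OF cS] continuous_on_subset[OF cJ]) auto
    obtain z2 where z2: "z2 \<in> {z..b}" "S z2 - J z2 = 0"
      using zero_between[OF c6] z caseB Jz ord by (force simp: mult_le_0_iff)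
    have "z1 \<noteq> z" "z2 \<noteq> z" using z1 z2 z Jz by auto
    then have "z1 \<noteq> z2" using z1 z2 by auto
    moreover have "z1 \<in> {e-1..b}" "z2 \<in> {e-1..b}" using z1 z2 z ord by auto
    ultimately show False using SJ2 z1 z2 by auto
  qed
  have r1: "\<forall>u\<in>{e-1..a}. S u - I u < 0"
  proof (rule nozero[OF c4 g1e])
    show "S a - I a < 0" using Sa by simp
    show "\<forall>z1\<in>{e-1..a}. \<forall>z2\<in>{e-1..a}. S z1 - I z1 = 0 \<longrightarrow> S z2 - I z2 = 0 \<longrightarrow> z1 = z2"
      using SIu1 by auto
    show "\<forall>z\<in>{e-1<..<a}. S z - I z = 0 \<longrightarrow> (\<exists>\<epsilon>>0. \<forall>\<delta>. 0 < \<delta> \<and> \<delta> < \<epsilon> \<longrightarrow>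
           (S (z-\<delta>) - I (z-\<delta>)) * (S (z+\<delta>) - I (z+\<delta>)) < 0)"
      using SIc1 by auto
  qed
  show ?thesis using r1 r2 by auto
qed

lemma cis_shift_eq: "cis (2*pi*a) = cis (2*pi*b) \<Longrightarrow> cis (2*pi*(a+c)) = cis (2*pi*(b+c))"
  unfolding cis2pi_eq by auto

lemma cis_int_shift: "cis (2*pi*(u + real_of_int k)) = cis (2*pi*u)"
  unfolding cis2pi_eq by auto

lemma cis_minus1: "cis (2*pi*(u - 1)) = cis (2*pi*u)"
  using cis_int_shift[of u "-1"] by simp

lemma same_line: "cis (2*pi*u1) = cis (2*pi*u2) \<Longrightarrow> \<bar>u1 - u2\<bar> < 1 \<Longrightarrow> u1 = u2"
  unfolding cis2pi_eq using int_diff_small by blast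

lemma cis_match:
  assumes "cis (2*pi*u) = cis (2*pi*w)" "-1 < u" "u < 1" "-1 < w" "w < 1"
  shows "u = w \<or> u = w + 1 \<or> u = w - 1"
proof -
  obtain k :: int where k: "u = w + k" using assms(1) unfolding cis2pi_eq by blast
  have "real_of_int k < 2" "real_of_int k > -2" using k assms by linarith+
  then have "k < 2" "k > -2" by linarith+
  then have "k = 0 \<or> k = 1 \<or> k = -1" by linarith
  then show ?thesis using k by auto
qed

lemma vertex_rep: "v \<in> Cyl \<Longrightarrow> v = (cis (2*pi*xc v), yc v)"
  using xc_props[of v] unfolding Cyl_def yc_def by (simp add: prod_eq_iff)

lemma on_line_iff:
  assumes "relint e = (\<lambda>u. (cis (2*pi*u), H u)) ` {l<..<r}"
  shows "on_line e a y \<longleftrightarrow> (\<exists>u\<in>{l<..<r}. cis (2*pi*a) = cis (2*pi*u) \<and> y = H u)"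
  unfolding on_line_def assms by auto

lemma cross_height:
  assumes rE: "relint e = (\<lambda>u. (cis (2*pi*u), He u)) ` {l1<..<r1}" "r1 - l1 < 1"
    and rF: "relint f = (\<lambda>u. (cis (2*pi*u), Hf u)) ` {l2<..<r2}" "r2 - l2 < 1"
    and cr: "cross_at e f (cis (2*pi*u0), He u0)"
    and u0: "u0 \<in> {l1<..<r1}" and w0: "w0 \<in> {l2<..<r2}" and cw: "cis (2*pi*w0) = cis (2*pi*u0)"
  shows "\<exists>\<epsilon>>0. \<forall>\<delta>. 0<\<delta> \<and> \<delta><\<epsilon> \<longrightarrow> (He (u0-\<delta>) - Hf (w0-\<delta>)) * (He (u0+\<delta>) - Hf (w0+\<delta>)) < 0"
proof -
  define p where "p = (cis (2*pi*u0), He u0)"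
  have xp: "cis (2*pi*xc p) = cis (2*pi*u0)" using xc_props[of p] unfolding p_def by simp
  obtain \<epsilon>0 where e0: "\<epsilon>0 > 0" "\<forall>s t. 0 < s \<and> s < \<epsilon>0 \<and> 0 < t \<and> t < \<epsilon>0 \<longrightarrow>
        (\<exists>ye yf ye' yf'. on_line e (xc p - s) ye \<and> on_line f (xc p - s) yf \<and>
           on_line e (xc p + t) ye' \<and> on_line f (xc p + t) yf' \<and>
           (ye - yf) * (ye' - yf') < 0)"
    using cr unfolding cross_at_def p_def[symmetric] by blast
  define \<epsilon> where "\<epsilon> = min \<epsilon>0 (min (u0-l1) (min (r1-u0) (min (w0-l2) (r2-w0))))"
  have ee: "\<epsilon> \<le> \<epsilon>0" "\<epsilon> \<le> u0-l1" "\<epsilon> \<le> r1-u0" "\<epsilon> \<le> w0-l2" "\<epsilon> \<le> r2-w0"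
    unfolding \<epsilon>_def by linarith+
  have "\<epsilon> > 0" using e0 u0 w0 unfolding \<epsilon>_def by auto
  moreover have "(He (u0-\<delta>) - Hf (w0-\<delta>)) * (He (u0+\<delta>) - Hf (w0+\<delta>)) < 0"
    if d: "0 < \<delta>" "\<delta> < \<epsilon>" for \<delta>
  proof -
    obtain ye yf ye' yf' where y: "on_line e (xc p - \<delta>) ye" "on_line f (xc p - \<delta>) yf"
      "on_line e (xc p + \<delta>) ye'" "on_line f (xc p + \<delta>) yf'" "(ye - yf) * (ye' - yf') < 0"
    proof -
      have "0 < \<delta> \<and> \<delta> < \<epsilon>0 \<and> 0 < \<delta> \<and> \<delta> < \<epsilon>0" using d ee by linarith
      then show thesis using that e0(2)[rule_format, of \<delta> \<delta>] by blast
    qed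
    have c1: "cis (2*pi*(xc p - \<delta>)) = cis (2*pi*(u0 - \<delta>))"
      using cis_shift_eq[OF xp, of "-\<delta>"] by simp
    have c2: "cis (2*pi*(xc p + \<delta>)) = cis (2*pi*(u0 + \<delta>))"
      using cis_shift_eq[OF xp, of "\<delta>"] by simp
    have c3: "cis (2*pi*(xc p - \<delta>)) = cis (2*pi*(w0 - \<delta>))"
      using cis_shift_eq[OF xp, of "-\<delta>"] cis_shift_eq[OF cw, of "-\<delta>"] by simp
    have c4: "cis (2*pi*(xc p + \<delta>)) = cis (2*pi*(w0 + \<delta>))"
      using cis_shift_eq[OF xp, of "\<delta>"] cis_shift_eq[OF cw, of "\<delta>"] by simp
    have "ye = He (u0 - \<delta>)"
    proof -
      obtain u where u: "u \<in> {l1<..<r1}" "cis (2*pi*(xc p - \<delta>)) = cis (2*pi*u)" "ye = He u"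
        using y(1) on_line_iff[OF rE(1)] by blast
      have "u = u0 - \<delta>" using same_line[of u "u0-\<delta>"] u c1 rE(2) d ee by auto
      then show ?thesis using u by simp
    qed
    moreover have "ye' = He (u0 + \<delta>)"
    proof -
      obtain u where u: "u \<in> {l1<..<r1}" "cis (2*pi*(xc p + \<delta>)) = cis (2*pi*u)" "ye' = He u"
        using y(3) on_line_iff[OF rE(1)] by blast
      have "u = u0 + \<delta>" using same_line[of u "u0+\<delta>"] u c2 rE(2) d ee by auto
      then show ?thesis using u by simp
    qed
    moreover have "yf = Hf (w0 - \<delta>)"
    proof -
      obtain u where u: "u \<in> {l2<..<r2}" "cis (2*pi*(xc p - \<delta>)) = cis (2*pi*u)" "yf = Hf u"
        using y(2) on_line_iff[OF rF(1)] by blast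
      have "u = w0 - \<delta>" using same_line[of u "w0-\<delta>"] u c3 rF(2) d ee by auto
      then show ?thesis using u by simp
    qed
    moreover have "yf' = Hf (w0 + \<delta>)"
    proof -
      obtain u where u: "u \<in> {l2<..<r2}" "cis (2*pi*(xc p + \<delta>)) = cis (2*pi*u)" "yf' = Hf u"
        using y(4) on_line_iff[OF rF(1)] by blast
      have "u = w0 + \<delta>" using same_line[of u "w0+\<delta>"] u c4 rF(2) d ee by auto
      then show ?thesis using u by simp
    qed
    ultimately show ?thesis using y(5) by simp
  qed
  ultimately show ?thesis by blast
qed

lemma neg_prod: "((-x) - (-y)) * ((-x') - (-y')) = (x - y) * (x' - y')" for x y x' y' :: real
  by (simp add: algebra_simps)

lemma relint_sub: "relint g \<subseteq> path_image g"
  unfolding relint_def path_image_def by auto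

lemma main_geo:
  fixes n :: nat and v :: "nat \<Rightarrow> pt" and E :: "nat \<Rightarrow> nat \<Rightarrow> real \<Rightarrow> pt"
    and i j k s t :: nat
  assumes fl: "flag n v E"
    and idx: "1 \<le> i" "i < j" "j < k" "k < s" "s < t" "t \<le> n"
    and orient: "(prec (E j k) (E i j) \<and> below (v s) (E j k) \<and> below (v t) (E j k)) \<or>
                 (prec (E i j) (E j k) \<and> above (v s) (E j k) \<and> above (v t) (E j k))"
  shows "path_image (E s t) \<inter> path_image (E i j) = {} \<and> related (E s t) (E i j)"
proof -
  note F = fl[unfolded flag_def]
  note F1 = conjunct1[OF F]
  note F3 = conjunct1[OF conjunct2[OF conjunct2[OF F]]]
  note F4 = conjunct1[OF conjunct2[OF conjunct2[OF conjunct2[OF F]]]]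
  note F5 = conjunct1[OF conjunct2[OF conjunct2[OF conjunct2[OF conjunct2[OF F]]]]]
  note F6 = conjunct2[OF conjunct2[OF conjunct2[OF conjunct2[OF conjunct2[OF F]]]]]
  have cyl: "\<And>m. m \<in> {1..n} \<Longrightarrow> v m \<in> Cyl" using F1 by blast
  have xnz: "\<And>m. m \<in> {1..n} \<Longrightarrow> xc (v m) \<noteq> 0" using F3 by blast
  have xlt: "\<And>p q. 1 \<le> p \<Longrightarrow> p < q \<Longrightarrow> q \<le> n \<Longrightarrow> xc (v p) < xc (v q)"
    using F4 by blast
  have ed: "\<And>p q. 1 \<le> p \<Longrightarrow> p < q \<Longrightarrow> q \<le> n \<Longrightarrow>
        xmono (E p q) \<and> pathstart (E p q) = v p \<and> pathfinish (E p q) = v q \<and>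
        (\<forall>m\<in>{1..n}. m \<noteq> p \<and> m \<noteq> q \<longrightarrow> v m \<notin> path_image (E p q)) \<and>
        vline 0 \<inter> relint (E p q) \<noteq> {}"
    using F5 by blast
  have pr: "\<And>p q p' q'. 1 \<le> p \<Longrightarrow> p < q \<Longrightarrow> q \<le> n \<Longrightarrow> 1 \<le> p' \<Longrightarrow> p' < q' \<Longrightarrow> q' \<le> n \<Longrightarrow>
        (p, q) \<noteq> (p', q') \<Longrightarrow>
        (\<forall>x y. x \<in> path_image (E p q) \<inter> path_image (E p' q') \<and>
               y \<in> path_image (E p q) \<inter> path_image (E p' q') \<longrightarrow> x = y) \<and>
        (\<forall>x \<in> path_image (E p q) \<inter> path_image (E p' q').
           (\<exists>m \<in> {p, q} \<inter> {p', q'}. x = v m) \<or> cross_at (E p q) (E p' q') x)"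
    using F6 by blast
  define X where "X m = xc (v m)" for m
  define Y where "Y m = yc (v m)" for m
  have X01: "0 < X m \<and> X m < 1" if "m \<in> {1..n}" for m
    using xc_props[of "v m"] cyl[OF that] xnz[OF that] unfolding X_def Cyl_def by auto
  have vrep: "v m = (cis (2*pi*X m), Y m)" if "m \<in> {1..n}" for m
    using vertex_rep[OF cyl[OF that]] unfolding X_def Y_def .
  have EH: "\<exists>H. continuous_on {X q - 1..X p} H \<and>
      path_image (E p q) = (\<lambda>u. (cis (2*pi*u), H u)) ` {X q - 1..X p} \<and>
      relint (E p q) = (\<lambda>u. (cis (2*pi*u), H u)) ` {X q - 1<..<X p} \<and>
      H (X p) = Y p \<and> H (X q - 1) = Y q"
    if pq: "1 \<le> p" "p < q" "q \<le> n" for p q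
  proof -
    have "p \<in> {1..n}" "q \<in> {1..n}" using pq by auto
    note edpq = ed[OF pq]
    obtain H where "continuous_on {X q - 1..X p} H"
      "path_image (E p q) = (\<lambda>u. (cis (2*pi*u), H u)) ` {X q - 1..X p}"
      "relint (E p q) = (\<lambda>u. (cis (2*pi*u), H u)) ` {X q - 1<..<X p}"
      "H (X p) = Y p" "H (X q - 1) = Y q"
    proof (rule edge_height[of "E p q" "X p" "Y p" "X q" "Y q"])
      show "xmono (E p q)" using edpq by blast
      show "pathstart (E p q) = (cis (2*pi*X p), Y p)" using edpq vrep \<open>p \<in> {1..n}\<close> by auto
      show "pathfinish (E p q) = (cis (2*pi*X q), Y q)" using edpq vrep \<open>q \<in> {1..n}\<close> by auto
      show "0 < X p" using X01 \<open>p \<in> {1..n}\<close> by auto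
      show "X p < X q" using xlt[OF pq] unfolding X_def .
      show "X q < 1" using X01 \<open>q \<in> {1..n}\<close> by auto
      show "vline 0 \<inter> relint (E p q) \<noteq> {}" using edpq by blast
    qed
    then show ?thesis by blast
  qed
  have inn: "i \<in> {1..n}" "j \<in> {1..n}" "k \<in> {1..n}" "s \<in> {1..n}" "t \<in> {1..n}" using idx by auto
  define a where "a = X i"
  define b where "b = X j"
  define c where "c = X k"
  define d where "d = X s"
  define e where "e = X t"
  have ord: "0<a" "a<b" "b<c" "c<d" "d<e" "e<1"
    unfolding a_def b_def c_def d_def e_def X_def
    using X01[OF inn(1)] X01[OF inn(5)] xlt idx unfolding X_def by auto
  obtain HI where HI: "continuous_on {b-1..a} HI"
      "path_image (E i j) = (\<lambda>u. (cis (2*pi*u), HI u)) ` {b-1..a}"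
      "relint (E i j) = (\<lambda>u. (cis (2*pi*u), HI u)) ` {b-1<..<a}"
      "HI a = Y i" "HI (b-1) = Y j"
    using EH[of i j] idx unfolding a_def b_def by auto
  obtain HJ where HJ: "continuous_on {c-1..b} HJ"
      "path_image (E j k) = (\<lambda>u. (cis (2*pi*u), HJ u)) ` {c-1..b}"
      "relint (E j k) = (\<lambda>u. (cis (2*pi*u), HJ u)) ` {c-1<..<b}"
      "HJ b = Y j" "HJ (c-1) = Y k"
    using EH[of j k] idx unfolding c_def b_def by auto
  obtain HS where HS: "continuous_on {e-1..d} HS"
      "path_image (E s t) = (\<lambda>u. (cis (2*pi*u), HS u)) ` {e-1..d}"
      "relint (E s t) = (\<lambda>u. (cis (2*pi*u), HS u)) ` {e-1<..<d}"
      "HS d = Y s" "HS (e-1) = Y t"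
    using EH[of s t] idx unfolding d_def e_def by auto
  obtain HK where HK: "continuous_on {d-1..c} HK"
      "path_image (E k s) = (\<lambda>u. (cis (2*pi*u), HK u)) ` {d-1..c}"
      "relint (E k s) = (\<lambda>u. (cis (2*pi*u), HK u)) ` {d-1<..<c}"
      "HK c = Y k" "HK (d-1) = Y s"
    using EH[of k s] idx unfolding c_def d_def by auto
  have vi: "v i = (cis (2*pi*a), Y i)" using vrep[OF inn(1)] unfolding a_def .
  have vj: "v j = (cis (2*pi*b), Y j)" using vrep[OF inn(2)] unfolding b_def .
  have vk: "v k = (cis (2*pi*c), Y k)" using vrep[OF inn(3)] unfolding c_def .
  have vs: "v s = (cis (2*pi*d), Y s)" using vrep[OF inn(4)] unfolding d_def .
  have inimg: "\<And>H l r u. u \<in> {l..r} \<Longrightarrow> (cis (2*pi*u), H u) \<in> (\<lambda>u. (cis (2*pi*u), H u)) ` {l..r}"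
    by auto
  have inimg1: "\<And>H l r u. u - 1 \<in> {l..r} \<Longrightarrow> (cis (2*pi*u), H (u-1)) \<in> (\<lambda>u. (cis (2*pi*u), H u)) ` {l..r}"
    using cis_minus1 by (metis (no_types, lifting) image_eqI)
  have av1: "HS b \<noteq> HJ b"
  proof
    assume "HS b = HJ b"
    then have "v j \<in> path_image (E s t)" using HS(2) HJ(4) vj inimg[of b "e-1" d HS] ord by auto
    then show False using ed[of s t] idx inn by auto
  qed
  have av2: "HS c \<noteq> HK c"
  proof
    assume "HS c = HK c"
    then have "v k \<in> path_image (E s t)" using HS(2) HK(4) vk inimg[of c "e-1" d HS] ord by auto
    then show False using ed[of s t] idx inn by auto
  qed
  have av3: "HK b \<noteq> HJ b"
  proof
    assume "HK b = HJ b"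
    then have "v j \<in> path_image (E k s)" using HK(2) HJ(4) vj inimg[of b "d-1" c HK] ord by auto
    then show False using ed[of k s] idx inn by auto
  qed
  have av4: "HS a \<noteq> HI a"
  proof
    assume "HS a = HI a"
    then have "v i \<in> path_image (E s t)" using HS(2) HI(4) vi inimg[of a "e-1" d HS] ord by auto
    then show False using ed[of s t] idx inn by auto
  qed
  have ne: "(s,t) \<noteq> (j,k)" "(s,t) \<noteq> (k,s)" "(k,s) \<noteq> (j,k)" "(s,t) \<noteq> (i,j)" "(j,k) \<noteq> (i,j)" "(i,j) \<noteq> (j,k)"
    using idx by auto
  have uSJ: "\<forall>x y. x \<in> path_image (E s t) \<inter> path_image (E j k) \<and> y \<in> path_image (E s t) \<inter> path_image (E j k) \<longrightarrow> x = y"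
    using pr[of s t j k] idx ne by auto
  have uSK: "\<forall>x y. x \<in> path_image (E s t) \<inter> path_image (E k s) \<and> y \<in> path_image (E s t) \<inter> path_image (E k s) \<longrightarrow> x = y"
    using pr[of s t k s] idx ne by auto
  have uKJ: "\<forall>x y. x \<in> path_image (E k s) \<inter> path_image (E j k) \<and> y \<in> path_image (E k s) \<inter> path_image (E j k) \<longrightarrow> x = y"
    using pr[of k s j k] idx ne by auto
  have prSI: "(\<forall>x y. x \<in> path_image (E s t) \<inter> path_image (E i j) \<and> y \<in> path_image (E s t) \<inter> path_image (E i j) \<longrightarrow> x = y) \<and>
        (\<forall>x \<in> path_image (E s t) \<inter> path_image (E i j).
           (\<exists>m \<in> {s, t} \<inter> {i, j}. x = v m) \<or> cross_at (E s t) (E i j) x)"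
    using pr[of s t i j] idx ne by auto
  have stij: "{s, t} \<inter> {i, j} = {}" using idx by auto
  note uSI = conjunct1[OF prSI]
  have cSI: "\<And>x. x \<in> path_image (E s t) \<Longrightarrow> x \<in> path_image (E i j) \<Longrightarrow> cross_at (E s t) (E i j) x"
    using conjunct2[OF prSI] stij by auto
  have SJ1: "\<forall>u1\<in>{e-1..b}. \<forall>u2\<in>{c..d}. HS u1 = HJ u1 \<longrightarrow> HS u2 \<noteq> HJ (u2-1)"
  proof (intro ballI impI notI)
    fix u1 u2 assume u: "u1 \<in> {e-1..b}" "u2 \<in> {c..d}" "HS u1 = HJ u1" "HS u2 = HJ (u2-1)"
    have x1: "(cis (2*pi*u1), HS u1) \<in> path_image (E s t) \<inter> path_image (E j k)"
      using HS(2) HJ(2) inimg[of u1 "e-1" d HS] inimg[of u1 "c-1" b HJ] u ord by auto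
    have x2: "(cis (2*pi*u2), HS u2) \<in> path_image (E s t) \<inter> path_image (E j k)"
      using HS(2) HJ(2) inimg[of u2 "e-1" d HS] inimg1[of u2 "c-1" b HJ] u ord by auto
    have "cis (2*pi*u1) = cis (2*pi*u2)" using uSJ x1 x2 by blast
    then have "u1 = u2" using same_line[of u1 u2] u ord by auto
    then show False using u ord by auto
  qed
  have SJ2: "\<forall>u1\<in>{e-1..b}. \<forall>u2\<in>{e-1..b}. HS u1 = HJ u1 \<longrightarrow> HS u2 = HJ u2 \<longrightarrow> u1 = u2"
  proof (intro ballI impI)
    fix u1 u2 assume u: "u1 \<in> {e-1..b}" "u2 \<in> {e-1..b}" "HS u1 = HJ u1" "HS u2 = HJ u2"
    have x1: "(cis (2*pi*u1), HS u1) \<in> path_image (E s t) \<inter> path_image (E j k)"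
      using HS(2) HJ(2) inimg[of u1 "e-1" d HS] inimg[of u1 "c-1" b HJ] u ord by auto
    have x2: "(cis (2*pi*u2), HS u2) \<in> path_image (E s t) \<inter> path_image (E j k)"
      using HS(2) HJ(2) inimg[of u2 "e-1" d HS] inimg[of u2 "c-1" b HJ] u ord by auto
    have "cis (2*pi*u1) = cis (2*pi*u2)" using uSJ x1 x2 by blast
    then show "u1 = u2" using same_line[of u1 u2] u ord by auto
  qed
  have SK: "\<forall>u\<in>{e-1..c}. HS u \<noteq> HK u"
  proof (intro ballI notI)
    fix u assume u: "u \<in> {e-1..c}" "HS u = HK u"
    have x1: "(cis (2*pi*u), HS u) \<in> path_image (E s t) \<inter> path_image (E k s)"
      using HS(2) HK(2) inimg[of u "e-1" d HS] inimg[of u "d-1" c HK] u ord by auto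
    have x2: "(cis (2*pi*d), HS d) \<in> path_image (E s t) \<inter> path_image (E k s)"
      using HS(2) HK(2) inimg[of d "e-1" d HS] inimg1[of d "d-1" c HK] HS(4) HK(5) ord by auto
    have "cis (2*pi*u) = cis (2*pi*d)" using uSK x1 x2 by blast
    then have "u = d" using same_line[of u d] u ord by auto
    then show False using u ord by auto
  qed
  have KJ: "\<forall>u\<in>{d-1..b}. HK u \<noteq> HJ u"
  proof (intro ballI notI)
    fix u assume u: "u \<in> {d-1..b}" "HK u = HJ u"
    have x1: "(cis (2*pi*u), HK u) \<in> path_image (E k s) \<inter> path_image (E j k)"
      using HK(2) HJ(2) inimg[of u "d-1" c HK] inimg[of u "c-1" b HJ] u ord by auto
    have x2: "(cis (2*pi*c), HK c) \<in> path_image (E k s) \<inter> path_image (E j k)"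
      using HK(2) HJ(2) inimg[of c "d-1" c HK] inimg1[of c "c-1" b HJ] HK(4) HJ(5) ord by auto
    have "cis (2*pi*u) = cis (2*pi*c)" using uKJ x1 x2 by blast
    then have "u = c" using same_line[of u c] u ord by auto
    then show False using u ord by auto
  qed
  have SIu1: "\<forall>u1\<in>{e-1..a}. \<forall>u2\<in>{e-1..a}. HS u1 = HI u1 \<longrightarrow> HS u2 = HI u2 \<longrightarrow> u1 = u2"
  proof (intro ballI impI)
    fix u1 u2 assume u: "u1 \<in> {e-1..a}" "u2 \<in> {e-1..a}" "HS u1 = HI u1" "HS u2 = HI u2"
    have x1: "(cis (2*pi*u1), HS u1) \<in> path_image (E s t) \<inter> path_image (E i j)"
      using HS(2) HI(2) inimg[of u1 "e-1" d HS] inimg[of u1 "b-1" a HI] u ord by auto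
    have x2: "(cis (2*pi*u2), HS u2) \<in> path_image (E s t) \<inter> path_image (E i j)"
      using HS(2) HI(2) inimg[of u2 "e-1" d HS] inimg[of u2 "b-1" a HI] u ord by auto
    have "cis (2*pi*u1) = cis (2*pi*u2)" using uSI x1 x2 by blast
    then show "u1 = u2" using same_line[of u1 u2] u ord by auto
  qed
  have SIu2: "\<forall>u1\<in>{b..d}. \<forall>u2\<in>{b..d}. HS u1 = HI (u1-1) \<longrightarrow> HS u2 = HI (u2-1) \<longrightarrow> u1 = u2"
  proof (intro ballI impI)
    fix u1 u2 assume u: "u1 \<in> {b..d}" "u2 \<in> {b..d}" "HS u1 = HI (u1-1)" "HS u2 = HI (u2-1)"
    have x1: "(cis (2*pi*u1), HS u1) \<in> path_image (E s t) \<inter> path_image (E i j)"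
      using HS(2) HI(2) inimg[of u1 "e-1" d HS] inimg1[of u1 "b-1" a HI] u ord by auto
    have x2: "(cis (2*pi*u2), HS u2) \<in> path_image (E s t) \<inter> path_image (E i j)"
      using HS(2) HI(2) inimg[of u2 "e-1" d HS] inimg1[of u2 "b-1" a HI] u ord by auto
    have "cis (2*pi*u1) = cis (2*pi*u2)" using uSI x1 x2 by blast
    then show "u1 = u2" using same_line[of u1 u2] u ord by auto
  qed
  have lenS: "d - (e-1) < 1" and lenI: "a - (b-1) < 1" using ord by auto
  have SIc1: "\<forall>z\<in>{e-1<..<a}. HS z = HI z \<longrightarrow> (\<exists>\<epsilon>>0. \<forall>\<delta>. 0<\<delta> \<and> \<delta><\<epsilon> \<longrightarrow>
                  (HS (z-\<delta>) - HI (z-\<delta>)) * (HS (z+\<delta>) - HI (z+\<delta>)) < 0)"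
  proof (intro ballI impI)
    fix z assume z: "z \<in> {e-1<..<a}" "HS z = HI z"
    have "(cis (2*pi*z), HS z) \<in> path_image (E s t)" "(cis (2*pi*z), HS z) \<in> path_image (E i j)"
      using HS(2) HI(2) inimg[of z "e-1" d HS] inimg[of z "b-1" a HI] z ord by auto
    then have cr: "cross_at (E s t) (E i j) (cis (2*pi*z), HS z)" using cSI by blast
    show "\<exists>\<epsilon>>0. \<forall>\<delta>. 0<\<delta> \<and> \<delta><\<epsilon> \<longrightarrow> (HS (z-\<delta>) - HI (z-\<delta>)) * (HS (z+\<delta>) - HI (z+\<delta>)) < 0"
      by (rule cross_height[OF HS(3) lenS HI(3) lenI cr]) (use z ord in auto)
  qed
  have SIc2: "\<forall>z\<in>{b<..<d}. HS z = HI (z-1) \<longrightarrow> (\<exists>\<epsilon>>0. \<forall>\<delta>. 0<\<delta> \<and> \<delta><\<epsilon> \<longrightarrow>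
                  (HS (z-\<delta>) - HI (z-\<delta>-1)) * (HS (z+\<delta>) - HI (z+\<delta>-1)) < 0)"
  proof (intro ballI impI)
    fix z assume z: "z \<in> {b<..<d}" "HS z = HI (z-1)"
    have "(cis (2*pi*z), HS z) \<in> path_image (E s t)" "(cis (2*pi*z), HS z) \<in> path_image (E i j)"
      using HS(2) HI(2) inimg[of z "e-1" d HS] inimg1[of z "b-1" a HI] z ord by auto
    then have cr: "cross_at (E s t) (E i j) (cis (2*pi*z), HS z)" using cSI by blast
    have "\<exists>\<epsilon>>0. \<forall>\<delta>. 0<\<delta> \<and> \<delta><\<epsilon> \<longrightarrow> (HS (z-\<delta>) - HI (z-1-\<delta>)) * (HS (z+\<delta>) - HI (z-1+\<delta>)) < 0"
      by (rule cross_height[OF HS(3) lenS HI(3) lenI cr]) (use z ord cis_minus1 in auto)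
    moreover have "\<And>\<delta>. z-1-\<delta> = z-\<delta>-1" "\<And>\<delta>. z-1+\<delta> = z+\<delta>-1" by auto
    ultimately show "\<exists>\<epsilon>>0. \<forall>\<delta>. 0<\<delta> \<and> \<delta><\<epsilon> \<longrightarrow> (HS (z-\<delta>) - HI (z-\<delta>-1)) * (HS (z+\<delta>) - HI (z+\<delta>-1)) < 0"
      by simp
  qed
  have IJne: "\<forall>u\<in>{c-1<..<a}. HJ u \<noteq> HI u"
  proof (intro ballI notI)
    fix u assume u: "u \<in> {c-1<..<a}" "HJ u = HI u"
    define p where "p = (cis (2*pi*u), HJ u)"
    have pr1: "p \<in> relint (E j k)" "p \<in> relint (E i j)"
      unfolding p_def using HJ(3) HI(3) u ord by auto
    then have pp: "p \<in> path_image (E j k)" "p \<in> path_image (E i j)" using relint_sub by blast+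
    have nvj: "p \<noteq> v j"
    proof
      assume "p = v j"
      then have "cis (2*pi*u) = cis (2*pi*b)" using vj unfolding p_def by simp
      then have "u = b" using same_line[of u b] u ord by auto
      then show False using u ord by auto
    qed
    have jj: "{j,k} \<inter> {i,j} = {j}" "{i,j} \<inter> {j,k} = {j}" using idx by auto
    have ii: "1 \<le> j" "j < k" "k \<le> n" "1 \<le> i" "i < j" "j \<le> n" using idx by auto
    have "(\<exists>m \<in> {j, k} \<inter> {i, j}. p = v m) \<or> cross_at (E j k) (E i j) p"
      using conjunct2[OF pr[OF ii ne(5)]] pp by blast
    then have c1: "cross_at (E j k) (E i j) p" using jj nvj by auto
    have "(\<exists>m \<in> {i, j} \<inter> {j, k}. p = v m) \<or> cross_at (E i j) (E j k) p"
      using conjunct2[OF pr[OF ii(4-6) ii(1-3) ne(6)]] pp by blast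
    then have c2: "cross_at (E i j) (E j k) p" using jj nvj by auto
    have "\<not> crosses (E j k) (E i j) \<or> \<not> crosses (E i j) (E j k)"
      using orient unfolding prec_def related_def by blast
    then show False using c1 c2 unfolding crosses_def by blast
  qed
  have olJ: "on_line (E j k) u (HJ u)" if "u \<in> {c-1<..<b}" for u
    using that unfolding on_line_def HJ(3) by auto
  have olI: "on_line (E i j) u (HI u)" if "u \<in> {b-1<..<a}" for u
    using that unfolding on_line_def HI(3) by auto
  have olJv: "y = HJ (x - 1)" if "on_line (E j k) x y" "x \<in> {c..b+1}" "x - 1 \<in> {c-1<..<b}" for x y
  proof -
    have "(cis (2*pi*x), y) \<in> (\<lambda>u. (cis (2*pi*u), HJ u)) ` {c-1<..<b}"
      using that(1) unfolding on_line_def HJ(3) .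
    then obtain u where u: "u \<in> {c-1<..<b}" "cis (2*pi*x) = cis (2*pi*u)" "y = HJ u"
      by (auto simp: image_iff)
    have "cis (2*pi*u) = cis (2*pi*(x-1))" using u(2) cis_minus1 by simp
    then have "u = x - 1" using same_line[of u "x-1"] u that ord by auto
    then show ?thesis using u by simp
  qed
  have Xs: "xc (v s) = d" "xc (v t) = e" "yc (v s) = Y s" "yc (v t) = Y t"
    unfolding d_def e_def X_def Y_def by auto
  have core_concl: "(\<forall>u\<in>{e-1..a}. HS u \<noteq> HI u) \<and> (\<forall>u\<in>{b..d}. HS u \<noteq> HI (u-1)) \<and>
     ((\<forall>u\<in>{e-1..a}. HS u < HI u) \<and> (\<forall>u\<in>{b..d}. HS u < HI (u-1)) \<or>
      (\<forall>u\<in>{e-1..a}. HI u < HS u) \<and> (\<forall>u\<in>{b..d}. HI (u-1) < HS u))"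
  proof (cases "prec (E j k) (E i j) \<and> below (v s) (E j k) \<and> below (v t) (E j k)")
    case True
    have prec': "\<forall>u\<in>{c-1<..<a}. HJ u < HI u"
    proof
      fix u assume u: "u \<in> {c-1<..<a}"
      have "HJ u \<le> HI u" using True olJ[of u] olI[of u] u ord unfolding prec_def by auto
      then show "HJ u < HI u" using IJne u by force
    qed
    obtain y where y: "on_line (E j k) d y" "Y s < y" using True Xs unfolding below_def by auto
    have bs: "HS d < HJ (d-1)" using olJv[OF y(1)] y(2) HS(4) ord by auto
    obtain y' where y': "on_line (E j k) e y'" "Y t < y'" using True Xs unfolding below_def by auto
    have bt: "HS (e-1) < HJ (e-1)" using olJv[OF y'(1)] y'(2) HS(5) ord by auto
    have "(\<forall>u\<in>{e-1..a}. HS u < HI u) \<and> (\<forall>u\<in>{b..d}. HS u < HI (u-1))"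
      by (rule core[OF ord HI(1) HJ(1) HS(1) HK(1) _ _ _ prec' bs bt av1 av2 av3 av4 SJ1 SJ2 SK KJ SIu1 SIu2 SIc1 SIc2])
        (use HI HJ HS HK in auto)
    then show ?thesis by force
  next
    case False
    then have T: "prec (E i j) (E j k) \<and> above (v s) (E j k) \<and> above (v t) (E j k)" using orient by blast
    have prec': "\<forall>u\<in>{c-1<..<a}. - HJ u < - HI u"
    proof
      fix u assume u: "u \<in> {c-1<..<a}"
      have "HI u \<le> HJ u" using T olJ[of u] olI[of u] u ord unfolding prec_def by auto
      then show "- HJ u < - HI u" using IJne u by force
    qed
    obtain y where y: "on_line (E j k) d y" "y < Y s" using T Xs unfolding above_def by auto
    have bs: "- HS d < - HJ (d-1)" using olJv[OF y(1)] y(2) HS(4) ord by auto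
    obtain y' where y': "on_line (E j k) e y'" "y' < Y t" using T Xs unfolding above_def by auto
    have bt: "- HS (e-1) < - HJ (e-1)" using olJv[OF y'(1)] y'(2) HS(5) ord by auto
    have cm: "continuous_on {l..r} (\<lambda>u. - H u)" if "continuous_on {l..r} H" for l r and H :: "real \<Rightarrow> real"
      using that by (intro continuous_intros)
    have n1: "- HI (b-1) = - HJ b" using HI(5) HJ(4) by simp
    have n2: "- HJ (c-1) = - HK c" using HJ(5) HK(4) by simp
    have n3: "- HS d = - HK (d-1)" using HS(4) HK(5) by simp
    have a1: "- HS b \<noteq> - HJ b" using av1 by simp
    have a2: "- HS c \<noteq> - HK c" using av2 by simp
    have a3: "- HK b \<noteq> - HJ b" using av3 by simp
    have a4: "- HS a \<noteq> - HI a" using av4 by simp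
    have m1: "\<forall>u1\<in>{e-1..b}. \<forall>u2\<in>{c..d}. - HS u1 = - HJ u1 \<longrightarrow> - HS u2 \<noteq> - HJ (u2-1)"
      using SJ1 by simp
    have m2: "\<forall>u1\<in>{e-1..b}. \<forall>u2\<in>{e-1..b}. - HS u1 = - HJ u1 \<longrightarrow> - HS u2 = - HJ u2 \<longrightarrow> u1 = u2"
      using SJ2 by simp
    have m3: "\<forall>u\<in>{e-1..c}. - HS u \<noteq> - HK u" using SK by simp
    have m4: "\<forall>u\<in>{d-1..b}. - HK u \<noteq> - HJ u" using KJ by simp
    have m5: "\<forall>u1\<in>{e-1..a}. \<forall>u2\<in>{e-1..a}. - HS u1 = - HI u1 \<longrightarrow> - HS u2 = - HI u2 \<longrightarrow> u1 = u2"
      using SIu1 by simp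
    have m6: "\<forall>u1\<in>{b..d}. \<forall>u2\<in>{b..d}. - HS u1 = - HI (u1-1) \<longrightarrow> - HS u2 = - HI (u2-1) \<longrightarrow> u1 = u2"
      using SIu2 by simp
    have m7: "\<forall>z\<in>{e-1<..<a}. - HS z = - HI z \<longrightarrow> (\<exists>\<epsilon>>0. \<forall>\<delta>. 0<\<delta> \<and> \<delta><\<epsilon> \<longrightarrow>
                  (- HS (z-\<delta>) - - HI (z-\<delta>)) * (- HS (z+\<delta>) - - HI (z+\<delta>)) < 0)"
      unfolding neg_prod neg_equal_iff_equal using SIc1 by blast
    have m8: "\<forall>z\<in>{b<..<d}. - HS z = - HI (z-1) \<longrightarrow> (\<exists>\<epsilon>>0. \<forall>\<delta>. 0<\<delta> \<and> \<delta><\<epsilon> \<longrightarrow>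
                  (- HS (z-\<delta>) - - HI (z-\<delta>-1)) * (- HS (z+\<delta>) - - HI (z+\<delta>-1)) < 0)"
      unfolding neg_prod neg_equal_iff_equal using SIc2 by blast
    have "(\<forall>u\<in>{e-1..a}. - HS u < - HI u) \<and> (\<forall>u\<in>{b..d}. - HS u < - HI (u-1))"
      by (rule core[OF ord cm[OF HI(1)] cm[OF HJ(1)] cm[OF HS(1)] cm[OF HK(1)] n1 n2 n3 prec' bs bt
            a1 a2 a3 a4 m1 m2 m3 m4 m5 m6 m7 m8])
    then show ?thesis by force
  qed
  have cls: "(u = w \<and> u \<in> {e-1..a}) \<or> (w = u - 1 \<and> u \<in> {b..d})"
    if "u \<in> {e-1..d}" "w \<in> {b-1..a}" "cis (2*pi*u) = cis (2*pi*w)" for u w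
  proof -
    have "u = w \<or> u = w + 1 \<or> u = w - 1" using cis_match[OF that(3)] that ord by auto
    then show ?thesis using that ord by auto
  qed
  have disj: "path_image (E s t) \<inter> path_image (E i j) = {}"
  proof (rule ccontr)
    assume "\<not> ?thesis"
    then obtain x where x: "x \<in> path_image (E s t)" "x \<in> path_image (E i j)" by blast
    obtain u where u: "u \<in> {e-1..d}" "x = (cis (2*pi*u), HS u)" using x(1) HS(2) by auto
    obtain w where w: "w \<in> {b-1..a}" "x = (cis (2*pi*w), HI w)" using x(2) HI(2) by auto
    have "cis (2*pi*u) = cis (2*pi*w)" "HS u = HI w" using u w by auto
    then show False using cls[OF u(1) w(1)] core_concl by auto
  qed
  have ncr: "\<not> crosses (E s t) (E i j)"
    unfolding crosses_def cross_at_def using disj relint_sub by blast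
  have ex: "\<exists>a' ye yf. on_line (E s t) a' ye \<and> on_line (E i j) a' yf"
  proof -
    define u0 where "u0 = (e - 1 + a) / 2"
    have "u0 \<in> {e-1<..<d}" "u0 \<in> {b-1<..<a}" unfolding u0_def using ord by auto
    then have "on_line (E s t) u0 (HS u0)" "on_line (E i j) u0 (HI u0)"
      unfolding on_line_def HS(3) HI(3) by auto
    then show ?thesis by blast
  qed
  have pairs: "(ye < yf) \<or> (yf < ye)" and
     pairs2: "(\<forall>u\<in>{e-1..a}. HS u < HI u) \<and> (\<forall>u\<in>{b..d}. HS u < HI (u-1)) \<Longrightarrow> ye < yf"
     and pairs3: "(\<forall>u\<in>{e-1..a}. HI u < HS u) \<and> (\<forall>u\<in>{b..d}. HI (u-1) < HS u) \<Longrightarrow> yf < ye"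
    if "on_line (E s t) a' ye" "on_line (E i j) a' yf" for a' ye yf
  proof -
    have "(cis (2*pi*a'), ye) \<in> (\<lambda>u. (cis (2*pi*u), HS u)) ` {e-1<..<d}"
      using that(1) unfolding on_line_def HS(3) .
    then obtain u where u: "u \<in> {e-1<..<d}" "cis (2*pi*a') = cis (2*pi*u)" "ye = HS u"
      by (auto simp: image_iff)
    have "(cis (2*pi*a'), yf) \<in> (\<lambda>u. (cis (2*pi*u), HI u)) ` {b-1<..<a}"
      using that(2) unfolding on_line_def HI(3) .
    then obtain w where w: "w \<in> {b-1<..<a}" "cis (2*pi*a') = cis (2*pi*w)" "yf = HI w"
      by (auto simp: image_iff)
    have cc: "(u = w \<and> u \<in> {e-1..a}) \<or> (w = u - 1 \<and> u \<in> {b..d})"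
      using cls[of u w] u w by auto
    show "(ye < yf) \<or> (yf < ye)" using cc core_concl u w by force
    show "ye < yf" if "(\<forall>u\<in>{e-1..a}. HS u < HI u) \<and> (\<forall>u\<in>{b..d}. HS u < HI (u-1))"
      using cc that u w by force
    show "yf < ye" if "(\<forall>u\<in>{e-1..a}. HI u < HS u) \<and> (\<forall>u\<in>{b..d}. HI (u-1) < HS u)"
      using cc that u w by force
  qed
  have rel: "related (E s t) (E i j)"
    unfolding related_def
  proof (intro conjI ncr ex)
    show "(\<forall>a ye yf. on_line (E s t) a ye \<and> on_line (E i j) a yf \<longrightarrow> ye \<le> yf) \<or>
          (\<forall>a ye yf. on_line (E s t) a ye \<and> on_line (E i j) a yf \<longrightarrow> yf \<le> ye)"
    proof (cases "(\<forall>u\<in>{e-1..a}. HS u < HI u) \<and> (\<forall>u\<in>{b..d}. HS u < HI (u-1))")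
      case True
      then show ?thesis using pairs2 by (meson less_imp_le)
    next
      case False
      then have "(\<forall>u\<in>{e-1..a}. HI u < HS u) \<and> (\<forall>u\<in>{b..d}. HI (u-1) < HS u)" using core_concl by blast
      then show ?thesis using pairs3 by (meson less_imp_le)
    qed
  qed
  show ?thesis using disj rel by blast
qed

theorem claim15:
  fixes n :: nat and v :: "nat \<Rightarrow> pt" and E :: "nat \<Rightarrow> nat \<Rightarrow> real \<Rightarrow> pt"
    and i j k :: nat
  assumes "flag n v E"
    and "1 \<le> i" and "i < j" and "j < k" and "k \<le> n"
  shows "(good_upper n v E i j k \<longrightarrow>
            (\<forall>s t. s \<in> Vminus n v E j k \<and> t \<in> Vminus n v E j k \<and> s < t \<longrightarrow>
               path_image (E s t) \<inter> path_image (E i j) = {} \<and> related (E s t) (E i j))) \<and>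
         (good_lower n v E i j k \<longrightarrow>
            (\<forall>s t. s \<in> Vplus n v E j k \<and> t \<in> Vplus n v E j k \<and> s < t \<longrightarrow>
               path_image (E s t) \<inter> path_image (E i j) = {} \<and> related (E s t) (E i j)))"
proof (rule conjI; intro impI allI)
  fix s t
  assume gu: "good_upper n v E i j k"
    and st: "s \<in> Vminus n v E j k \<and> t \<in> Vminus n v E j k \<and> s < t"
  have h: "k < s" "s < t" "t \<le> n" "below (v s) (E j k)" "below (v t) (E j k)" "prec (E j k) (E i j)"
    using st gu unfolding Vminus_def good_upper_def by auto
  show "path_image (E s t) \<inter> path_image (E i j) = {} \<and> related (E s t) (E i j)"
    by (rule main_geo[OF assms(1,2,3,4) h(1,2,3)]) (use h in blast)
next
  fix s t
  assume gl: "good_lower n v E i j k"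
    and st: "s \<in> Vplus n v E j k \<and> t \<in> Vplus n v E j k \<and> s < t"
  have h: "k < s" "s < t" "t \<le> n" "above (v s) (E j k)" "above (v t) (E j k)" "prec (E i j) (E j k)"
    using st gl unfolding Vplus_def good_lower_def by auto
  show "path_image (E s t) \<inter> path_image (E i j) = {} \<and> related (E s t) (E i j)"
    by (rule main_geo[OF assms(1,2,3,4) h(1,2,3)]) (use h in blast)
qed

end
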